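(* Let $m\ge1$ be an integer and $H>1$ real. Let $L_m=\{\boldsymbol\theta\in\mathbb R^m: 0\le\theta_1\le\cdots\le\theta_m\le\pi\}$ and define $f=(f_1,\ldots,f_{m+1}):(1,H]\times L_m\to\mathbb R^{m+1}$ by letting $f_j(y,\theta_1,\ldots,\theta_m)=a_j$, where \[ (t-y)(t-y^{-1})\prod_{k=1}^m(t-e^{i\theta_k})(t-e^{-i\theta_k})=t^{2m+2}+a_1t^{2m+1}+\cdots+a_{m+1}t^{m+1}+\cdots+a_1t+1 . \] Then the Jacobian $J_f=\left|\frac{\partial(f_1,\ldots,f_{m+1})}{\partial(y,\theta_1,\ldots,\theta_m)}\right|$ equals \[ J_f(y,\theta_1,\ldots,\theta_m)=2^{\frac{m(m+1)}{2}}\left(1-\frac{1}{y^2}\right)\prod_{l=1}^{m}\left(y+\frac1y-2\cos\theta_l\right)\prod_{l=1}^m\sin\theta_l\prod_{1\le i<j\le m}\left|\cos\theta_i-\cos\theta_j\right|. \] *)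

theory Defs
  imports Complex_Main "HOL-Computational_Algebra.Polynomial" "Jordan_Normal_Form.Determinant"
begin

text \<open>Coordinates: x 0 = y, x k = theta_k for k = 1..m.\<close>

definition recip_poly :: "nat \<Rightarrow> (nat \<Rightarrow> real) \<Rightarrow> complex poly" where
  "recip_poly m x =
     [:- complex_of_real (x 0), 1:] * [:- complex_of_real (1 / x 0), 1:] *
     (\<Prod>k\<in>{1..m}. [:- exp (\<i> * complex_of_real (x k)), 1:] *
                    [:- exp (- \<i> * complex_of_real (x k)), 1:])"

text \<open>a_j = coefficient of t^(2m+2-j) (these coefficients are real).\<close>
definition coef_fun :: "nat \<Rightarrow> nat \<Rightarrow> (nat \<Rightarrow> real) \<Rightarrow> real" where
  "coef_fun m j x = Re (coeff (recip_poly m x) (2 * m + 2 - j))"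

definition partial_at :: "((nat \<Rightarrow> real) \<Rightarrow> real) \<Rightarrow> (nat \<Rightarrow> real) \<Rightarrow> nat \<Rightarrow> real" where
  "partial_at F x c = (THE D. ((\<lambda>t. F (x(c := t))) has_real_derivative D) (at (x c)))"

definition jacobian_f :: "nat \<Rightarrow> (nat \<Rightarrow> real) \<Rightarrow> real" where
  "jacobian_f m x = \<bar>det (mat (m + 1) (m + 1) (\<lambda>(i, c). partial_at (coef_fun m (i + 1)) x c))\<bar>"

end

theory Submission
  imports Defs
begin


definition vdm :: "nat \<Rightarrow> (nat \<Rightarrow> 'a::comm_ring_1) \<Rightarrow> 'a mat" where
  "vdm n r = mat (Suc n) (Suc n) (\<lambda>(p,k). r p ^ (n - k))"

lemma vdm_det: "det (vdm n r) = (\<Prod>j\<le>n. \<Prod>i<j. (r i - r j))"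
proof (induction n)
  case 0
  have "vdm 0 r \<in> carrier_mat 1 1" by (simp add: vdm_def)
  then show ?case by (simp add: det_single vdm_def)
next
  case (Suc n)
  define N where "N = Suc (Suc n)"
  define V where "V = vdm (Suc n) r"
  define c where "c = r (Suc n)"
  define M :: "'a mat" where "M = mat N N (\<lambda>(j,k). if j = k then 1 else if j = Suc k then - c else 0)"
  have V: "V \<in> carrier_mat N N" by (simp add: V_def vdm_def N_def)
  have M: "M \<in> carrier_mat N N" by (simp add: M_def)
  have detM: "det M = 1"
  proof -
    have "det M = prod_list (diag_mat M)"
      by (rule det_lower_triangular[OF _ M]) (simp add: M_def)
    also have "\<dots> = 1" 
      unfolding diag_mat_def using M by (subst map_cong[OF refl, of _ _ "\<lambda>_. 1"]) (auto simp: M_def map_replicate_const prod_list_replicate)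
    finally show ?thesis .
  qed
  have VMe: "(V * M) $$ (p,k) = (if k = Suc n then 1 else (r p - c) * r p ^ (n - k))"
    if "p < N" "k < N" for p k
  proof -
    have "(V * M) $$ (p,k) = (\<Sum>j<N. V $$ (p,j) * M $$ (j,k))"
      using that V M by (simp add: scalar_prod_def lessThan_atLeast0)
    also have "\<dots> = (\<Sum>j<N. (if j = k then V $$ (p,j) else 0) + (if j = Suc k then - c * V $$ (p,j) else 0))"
      by (rule sum.cong) (auto simp: M_def that)
    also have "\<dots> = V $$ (p,k) + (if Suc k < N then - c * V $$ (p, Suc k) else 0)"
      using that by (simp add: sum.distrib)
    also have "\<dots> = (if k = Suc n then 1 else (r p - c) * r p ^ (n - k))"
      using that by (auto simp: V_def vdm_def N_def algebra_simps Suc_diff_le power_Suc)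
    finally show ?thesis .
  qed
  have VM: "V * M \<in> carrier_mat N N" using V M by simp
  have dVM: "dim_row (V*M) = N" "dim_col (V*M) = N" using VM by auto
  have "det (V * M) = (\<Sum>j<N. (V * M) $$ (Suc n, j) * cofactor (V * M) (Suc n) j)"
    by (rule laplace_expansion_row[OF VM]) (simp add: N_def)
  also have "\<dots> = (\<Sum>j<N. if j = Suc n then cofactor (V * M) (Suc n) j else 0)"
    by (rule sum.cong) (auto simp: VMe N_def c_def)
  also have "\<dots> = cofactor (V * M) (Suc n) (Suc n)" by (simp add: N_def)
  also have "\<dots> = det (mat_delete (V * M) (Suc n) (Suc n))"
    by (simp add: cofactor_def)
  also have "mat_delete (V * M) (Suc n) (Suc n) = mat\<^sub>r (Suc n) (Suc n) (\<lambda>i. (r i - c) \<cdot>\<^sub>v vec (Suc n) (\<lambda>k. r i ^ (n - k)))"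
  proof (rule eq_matI)
    fix i j assume ij: "i < dim_row (mat\<^sub>r (Suc n) (Suc n) (\<lambda>i. (r i - c) \<cdot>\<^sub>v vec (Suc n) (\<lambda>k. r i ^ (n - k))))"
      "j < dim_col (mat\<^sub>r (Suc n) (Suc n) (\<lambda>i. (r i - c) \<cdot>\<^sub>v vec (Suc n) (\<lambda>k. r i ^ (n - k))))"
    have "mat_delete (V * M) (Suc n) (Suc n) $$ (i, j) = (V * M) $$ (i, j)"
      using ij unfolding mat_delete_def dVM by (simp add: N_def del: index_mult_mat)
    also have "\<dots> = (r i - c) * r i ^ (n - j)" using ij by (subst VMe) (auto simp: N_def)
    finally show "mat_delete (V * M) (Suc n) (Suc n) $$ (i, j) = mat\<^sub>r (Suc n) (Suc n) (\<lambda>i. (r i - c) \<cdot>\<^sub>v vec (Suc n) (\<lambda>k. r i ^ (n - k))) $$ (i, j)"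
      using ij by simp
  qed (use VM in \<open>auto simp: N_def\<close>)
  also have "det \<dots> = prod (\<lambda>i. r i - c) {0..<Suc n} * det (mat\<^sub>r (Suc n) (Suc n) (\<lambda>i. vec (Suc n) (\<lambda>k. r i ^ (n - k))))"
    by (rule det_rows_mul) auto
  also have "mat\<^sub>r (Suc n) (Suc n) (\<lambda>i. vec (Suc n) (\<lambda>k. r i ^ (n - k))) = vdm n r"
    by (rule eq_matI) (auto simp: vdm_def)
  finally have "det (V * M) = prod (\<lambda>i. r i - c) {0..<Suc n} * det (vdm n r)" .
  moreover have "det (V * M) = det V" using det_mult[OF V M] detM by simp
  ultimately show ?case using Suc.IH
    by (simp add: V_def c_def lessThan_atLeast0 mult.commute)
qed



lemma poly_sum_bound:
  fixes p :: "'a::comm_ring_1 poly"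
  assumes "degree p \<le> n" shows "poly p x = (\<Sum>i\<le>n. coeff p i * x ^ i)"
proof -
  have "poly p x = (\<Sum>i\<le>degree p. coeff p i * x ^ i)" by (rule poly_altdef)
  also have "\<dots> = (\<Sum>i\<le>n. coeff p i * x ^ i)"
    by (rule sum.mono_neutral_left) (use assms in \<open>auto simp: coeff_eq_0\<close>)
  finally show ?thesis .
qed

definition Qc :: "nat \<Rightarrow> (nat \<Rightarrow> real) \<Rightarrow> nat \<Rightarrow> real poly" where
  "Qc n r c = (\<Prod>l\<in>{0..n}-{c}. [:- r l, 1:])"

definition Gm :: "nat \<Rightarrow> (nat \<Rightarrow> real) \<Rightarrow> real mat" where
  "Gm n r = mat (Suc n) (Suc n) (\<lambda>(k,c). coeff (Qc n r c) (n - k))"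

lemma degree_Qc: assumes "c \<le> n " shows "degree (Qc n r c) \<le> n"
proof -
  have "degree (Qc n r c) \<le> sum (degree \<circ> (\<lambda>l. [:- r l, 1:])) ({0..n}-{c})"
    unfolding Qc_def by (rule degree_prod_sum_le) auto
  also have "\<dots> = card ({0..n}-{c})" by simp
  also have "\<dots> \<le> n" using assms by (auto simp: card_Diff_singleton)
  finally show ?thesis .
qed

lemma vdm_Gm: "vdm n r * Gm n r = mat (Suc n) (Suc n) (\<lambda>(p,c). if p = c then (\<Prod>l\<in>{0..n}-{c}. r c - r l) else 0)"
proof (rule eq_matI)
  fix p c assume pc: "p < dim_row (mat (Suc n) (Suc n) (\<lambda>(p,c). if p = c then (\<Prod>l\<in>{0..n}-{c}. r c - r l) else 0))"
     "c < dim_col (mat (Suc n) (Suc n) (\<lambda>(p,c). if p = c then (\<Prod>l\<in>{0..n}-{c}. r c - r l) else 0))"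
  then have p: "p < Suc n" and c: "c < Suc n" by auto
  have "(vdm n r * Gm n r) $$ (p,c) = (\<Sum>k<Suc n. r p ^ (n - k) * coeff (Qc n r c) (n - k))"
    using p c by (simp add: vdm_def Gm_def scalar_prod_def lessThan_atLeast0)
  also have "\<dots> = (\<Sum>k<Suc n. r p ^ (Suc n - Suc k) * coeff (Qc n r c) (Suc n - Suc k))" by simp
  also have "\<dots> = (\<Sum>k<Suc n. r p ^ k * coeff (Qc n r c) k)"
    by (rule sum.nat_diff_reindex[where g = "\<lambda>k. r p ^ k * coeff (Qc n r c) k"])
  also have "\<dots> = poly (Qc n r c) (r p)"
    using c poly_sum_bound[OF degree_Qc, of c n r "r p"] by (simp add: lessThan_Suc_atMost mult.commute)
  also have "\<dots> = (\<Prod>l\<in>{0..n}-{c}. r p - r l)"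
    by (simp add: Qc_def poly_prod)
  also have "\<dots> = (if p = c then (\<Prod>l\<in>{0..n}-{c}. r c - r l) else 0)"
    using p c by auto
  finally show "(vdm n r * Gm n r) $$ (p,c) = mat (Suc n) (Suc n) (\<lambda>(p,c). if p = c then (\<Prod>l\<in>{0..n}-{c}. r c - r l) else 0) $$ (p,c)"
    using p c by simp
qed (auto simp: vdm_def Gm_def)

lemma det_vdm_Gm: "det (vdm n r) * det (Gm n r) = (\<Prod>c\<le>n. \<Prod>l\<in>{0..n}-{c}. r c - r l)"
proof -
  have V: "vdm n r \<in> carrier_mat (Suc n) (Suc n)" by (simp add: vdm_def)
  have G: "Gm n r \<in> carrier_mat (Suc n) (Suc n)" by (simp add: Gm_def)
  have "det (vdm n r) * det (Gm n r) = det (vdm n r * Gm n r)" using det_mult[OF V G] by simp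
  also have "\<dots> = prod_list (diag_mat (vdm n r * Gm n r))"
    unfolding vdm_Gm by (rule det_upper_triangular) auto
  also have "\<dots> = (\<Prod>c\<le>n. \<Prod>l\<in>{0..n}-{c}. r c - r l)"
    unfolding vdm_Gm diag_mat_def
    by (simp add: prod.distinct_set_conv_list[symmetric] atLeast0LessThan lessThan_Suc_atMost[symmetric] del: upt_Suc)
  finally show ?thesis .
qed

definition VP :: "nat \<Rightarrow> (nat \<Rightarrow> real) \<Rightarrow> real" where
  "VP n r = (\<Prod>j\<le>n. \<Prod>i<j. \<bar>r i - r j\<bar>)"

lemma abs_offdiag: "\<bar>\<Prod>c\<le>n. \<Prod>l\<in>{0..n}-{c}. r c - r l\<bar> = VP n r ^ 2"
proof -
  have split: "{0..n}-{c} = {..<c} \<union> {Suc c..n}" if "c \<le> n" for c using that by auto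
  have "\<bar>\<Prod>c\<le>n. \<Prod>l\<in>{0..n}-{c}. r c - r l\<bar> = (\<Prod>c\<le>n. \<Prod>l\<in>{0..n}-{c}. \<bar>r c - r l\<bar>)"
    by (simp add: abs_prod)
  also have "\<dots> = (\<Prod>c\<le>n. (\<Prod>l<c. \<bar>r c - r l\<bar>) * (\<Prod>l\<in>{Suc c..n}. \<bar>r c - r l\<bar>))"
    by (rule prod.cong[OF refl], subst split) (auto intro: prod.union_disjoint)
  also have "\<dots> = (\<Prod>c\<le>n. \<Prod>l<c. \<bar>r c - r l\<bar>) * (\<Prod>c\<le>n. \<Prod>l\<in>{Suc c..n}. \<bar>r c - r l\<bar>)"
    by (rule prod.distrib)
  also have "(\<Prod>c\<le>n. \<Prod>l<c. \<bar>r c - r l\<bar>) = VP n r"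
    unfolding VP_def by (simp add: abs_minus_commute)
  also have "(\<Prod>c\<le>n. \<Prod>l\<in>{Suc c..n}. \<bar>r c - r l\<bar>) = (\<Prod>c<n. \<Prod>l\<in>{Suc c..n}. \<bar>r c - r l\<bar>)"
    by (simp add: lessThan_Suc_atMost[symmetric])
  also have "\<dots> = (\<Prod>l\<le>n. \<Prod>c<l. \<bar>r c - r l\<bar>)"
    by (rule prod.nested_swap'[symmetric])
  also have "\<dots> = VP n r" by (simp add: VP_def)
  finally show ?thesis by (simp add: power2_eq_square)
qed

lemma abs_det_Gm: "\<bar>det (Gm n r)\<bar> = VP n r"
proof (cases "\<exists>j\<le>n. \<exists>i<j. r i = r j")
  case True
  then obtain i j where ij: "j \<le> n" "i < j" "r i = r j" by blast
  have z: "(\<Prod>i<j. \<bar>r i - r j\<bar>) = 0" using ij by (auto simp: prod_zero_iff intro!: bexI[of _ i])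
  have "VP n r = 0" unfolding VP_def
    by (rule prod_zero[OF _ bexI[of "\<lambda>j. (\<Prod>i<j. \<bar>r i - r j\<bar>) = 0" j, OF z]]) (use ij in auto)
  moreover have "det (Gm n r) = 0"
  proof (rule det_identical_columns[of _ "Suc n" i j])
    have "Qc n r i = Qc n r j"
    proof -
      have e1: "{0..n}-{i} = insert j ({0..n}-{i,j})" and e2: "{0..n}-{j} = insert i ({0..n}-{i,j})"
        using ij by auto
      show ?thesis unfolding Qc_def e1 e2 using ij by (simp)
    qed
    then show "col (Gm n r) i = col (Gm n r) j"
      using ij by (auto simp: Gm_def)
  qed (use ij in \<open>auto simp: Gm_def\<close>)
  ultimately show ?thesis by simp
next
  case False
  have pos: "VP n r > 0" unfolding VP_def using False
    by (intro prod_pos) auto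
  have "\<bar>det (vdm n r)\<bar> = VP n r"
    unfolding vdm_det VP_def by (simp add: abs_prod)
  with det_vdm_Gm[where n=n and r=r] abs_offdiag[where n=n and r=r]
  have "VP n r * \<bar>det (Gm n r)\<bar> = VP n r * VP n r"
    by (metis abs_mult power2_eq_square)
  with pos show ?thesis by simp
qed



definition Bp :: "nat \<Rightarrow> nat \<Rightarrow> real poly" where
  "Bp n k = [:1,0,1:] ^ k * monom 1 (n - k)"

lemma poly_eq_nonzero:
  fixes p q :: "real poly"
  assumes "\<And>t. t \<noteq> 0 \<Longrightarrow> poly p t = poly q t" shows "p = q"
proof (rule ccontr)
  assume "p \<noteq> q"
  then have "p - q \<noteq> 0" by simp
  then have "finite {t. poly (p - q) t = 0}" by (rule poly_roots_finite)
  moreover have "{t. t \<noteq> 0} \<subseteq> {t. poly (p - q) t = 0}" using assms by auto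
  moreover have "infinite {t::real. t \<noteq> 0}"
  proof
    assume "finite {t::real. t \<noteq> 0}"
    then have "finite (insert 0 {t::real. t \<noteq> 0})" by simp
    moreover have "insert 0 {t::real. t \<noteq> 0} = UNIV" by auto
    ultimately show False by (simp add: infinite_UNIV_char_0)
  qed
  ultimately show False using finite_subset by blast
qed

lemma R_as_B:
  fixes r :: "nat \<Rightarrow> real" and S :: "nat set"
  assumes fin: "finite S" and card: "card S = n"
  shows "(\<Prod>l\<in>S. [:1, - r l, 1:]) = (\<Sum>k\<le>n. smult (coeff (\<Prod>l\<in>S. [:- r l, 1:]) k) (Bp n k))"
proof (rule poly_eq_nonzero)
  fix t :: real assume t: "t \<noteq> 0"
  let ?Q = "\<Prod>l\<in>S. [:- r l, 1:]"
  have degQ: "degree ?Q \<le> n"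
  proof -
    have "degree ?Q \<le> sum (degree \<circ> (\<lambda>l. [:- r l, 1:])) S"
      by (rule degree_prod_sum_le[OF fin])
    also have "\<dots> = card S" by simp
    finally show ?thesis using card by simp
  qed
  have "poly (\<Prod>l\<in>S. [:1, - r l, 1:]) t = (\<Prod>l\<in>S. t * (t + 1/t - r l))"
    by (simp add: poly_prod) (rule prod.cong, use t in \<open>auto simp: field_simps power2_eq_square\<close>)
  also have "\<dots> = t ^ card S * poly ?Q (t + 1/t)"
    by (simp add: poly_prod prod.distrib)
  also have "\<dots> = t ^ card S * (\<Sum>k\<le>n. coeff ?Q k * (t + 1/t) ^ k)"
    by (simp add: poly_sum_bound[OF degQ])
  also have "\<dots> = (\<Sum>k\<le>n. coeff ?Q k * ((t + 1/t) ^ k * t ^ n))"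
    using card by (simp add: sum_distrib_left algebra_simps)
  also have "\<dots> = (\<Sum>k\<le>n. coeff ?Q k * ((1 + t^2) ^ k * t ^ (n - k)))"
  proof (rule sum.cong[OF refl])
    fix k assume "k \<in> {..n}"
    then have "t ^ n = t ^ k * t ^ (n - k)" by (simp add: power_add[symmetric])
    moreover have "(t + 1/t) ^ k * t ^ k = (1 + t^2) ^ k"
      using t by (simp add: power_mult_distrib[symmetric] field_simps power2_eq_square)
    ultimately show "coeff ?Q k * ((t + 1/t) ^ k * t ^ n) = coeff ?Q k * ((1 + t^2) ^ k * t ^ (n - k))"
      by (metis mult.assoc)
  qed
  also have "\<dots> = poly (\<Sum>k\<le>n. smult (coeff ?Q k) (Bp n k)) t"
    by (simp add: poly_sum Bp_def poly_monom power2_eq_square)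
  finally show "poly (\<Prod>l\<in>S. [:1, - r l, 1:]) t = poly (\<Sum>k\<le>n. smult (coeff ?Q k) (Bp n k)) t" .
qed



lemma Bp_deg_lead:
  assumes "j \<le> n" shows "degree (Bp n j) = n + j" "lead_coeff (Bp n j) = 1"
proof -
  have nz: "[:1,0,1::real:] \<noteq> 0" by simp
  have d1: "degree ([:1,0,1::real:] ^ j) = 2 * j" by (simp add: degree_power_eq)
  have "degree (Bp n j) = degree ([:1,0,1::real:] ^ j) + degree (monom (1::real) (n - j))"
    unfolding Bp_def by (rule degree_mult_eq) (auto simp: nz)
  moreover have "degree (monom (1::real) (n-j)) = n - j" by (rule degree_monom_eq) simp
  ultimately show "degree (Bp n j) = n + j" using assms d1 by simp
  show "lead_coeff (Bp n j) = 1" unfolding Bp_def by (simp only: lead_coeff_mult lead_coeff_power lead_coeff_monom) simp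
qed

lemma Bp_diag: assumes "k \<le> n" shows "coeff (Bp n (n - k)) (2 * n - k) = 1"
proof -
  have "degree (Bp n (n - k)) = 2 * n - k" using Bp_deg_lead(1)[of "n-k" n] assms by simp
  then show ?thesis using Bp_deg_lead(2)[of "n-k" n] by simp
qed

lemma Bp_diag0: "coeff (Bp n 0) n = 1" using Bp_diag[of n n] by simp

definition Rc :: "nat \<Rightarrow> (nat \<Rightarrow> real) \<Rightarrow> nat \<Rightarrow> real poly" where
  "Rc n r c = (\<Prod>l\<in>{0..n}-{c}. [:1, - r l, 1:])"

definition Cm :: "nat \<Rightarrow> (nat \<Rightarrow> real) \<Rightarrow> real mat" where
  "Cm n r = mat (Suc n) (Suc n) (\<lambda>(i,c). coeff (Rc n r c) (2 * n - i))"

definition Am :: "nat \<Rightarrow> real mat" where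
  "Am n = mat (Suc n) (Suc n) (\<lambda>(i,k). coeff (Bp n (n - k)) (2 * n - i))"

lemma det_Am: "det (Am n) = 1"
proof -
  have A: "Am n \<in> carrier_mat (Suc n) (Suc n)" by (simp add: Am_def)
  have "det (Am n) = prod_list (diag_mat (Am n))"
  proof (rule det_lower_triangular[OF _ A])
    fix i k assume ik: "i < k" "k < Suc n"
    have "degree (Bp n (n - k)) = 2 * n - k" using Bp_deg_lead(1)[of "n-k" n] ik by simp
    then show "Am n $$ (i, k) = 0" using ik by (simp add: Am_def coeff_eq_0)
  qed
  also have "\<dots> = 1"
    unfolding diag_mat_def using A
    by (subst map_cong[OF refl, of _ _ "\<lambda>_. 1"])
       (auto simp: Am_def map_replicate_const prod_list_replicate Bp_diag Bp_diag0)
  finally show ?thesis .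
qed

lemma Cm_eq: "Cm n r = Am n * Gm n r"
proof (rule eq_matI)
  fix i c assume "i < dim_row (Am n * Gm n r)" "c < dim_col (Am n * Gm n r)"
  then have i: "i < Suc n" and c: "c < Suc n" by (auto simp: Am_def Gm_def)
  let ?Q = "Qc n r c"
  have card: "card ({0..n}-{c}) = n" using c by (simp add: card_Diff_singleton)
  have "Cm n r $$ (i,c) = coeff (\<Sum>k\<le>n. smult (coeff ?Q k) (Bp n k)) (2 * n - i)"
    using i c R_as_B[OF _ card, of r] by (simp add: Cm_def Rc_def Qc_def)
  also have "\<dots> = (\<Sum>k<Suc n. coeff ?Q k * coeff (Bp n k) (2 * n - i))"
    by (simp add: coeff_sum lessThan_Suc_atMost)
  also have "\<dots> = (\<Sum>k<Suc n. coeff ?Q (Suc n - Suc k) * coeff (Bp n (Suc n - Suc k)) (2 * n - i))"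
    by (rule sum.nat_diff_reindex[symmetric, where g = "\<lambda>k. coeff ?Q k * coeff (Bp n k) (2 * n - i)"])
  also have "\<dots> = (Am n * Gm n r) $$ (i,c)"
    using i c by (simp add: Am_def Gm_def scalar_prod_def lessThan_atLeast0 mult.commute)
  finally show "Cm n r $$ (i,c) = (Am n * Gm n r) $$ (i,c)" .
qed (auto simp: Cm_def Am_def Gm_def)

lemma abs_det_Cm: "\<bar>det (Cm n r)\<bar> = VP n r"
proof -
  have A: "Am n \<in> carrier_mat (Suc n) (Suc n)" by (simp add: Am_def)
  have G: "Gm n r \<in> carrier_mat (Suc n) (Suc n)" by (simp add: Gm_def)
  show ?thesis unfolding Cm_eq det_mult[OF A G] det_Am by (simp add: abs_det_Gm)
qed



lemma map_of_real_mult: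
  "map_poly complex_of_real (p * q) = map_poly complex_of_real p * map_poly complex_of_real q"
  by (rule poly_eqI) (simp add: coeff_map_poly coeff_mult)

lemma map_of_real_prod:
  assumes "finite S"
  shows "map_poly complex_of_real (\<Prod>k\<in>S. f k) = (\<Prod>k\<in>S. map_poly complex_of_real (f k))"
  using assms by (induction S rule: finite_induct) (auto simp: map_of_real_mult)

lemma lin_pair: "[:- a, 1:] * [:- b, 1:] = [:a * b, - (a + b), (1::'a::comm_ring_1):]"
  by (simp add: mult_pCons_left algebra_simps)

lemma pair_real: "[:- complex_of_real a, 1:] * [:- complex_of_real b, 1:] = map_poly complex_of_real [:a * b, - (a + b), 1:]"
  by (simp add: lin_pair map_poly_pCons)

lemma pair_exp: "[:- exp (\<i> * complex_of_real t), 1:] * [:- exp (- \<i> * complex_of_real t), 1:] = map_poly complex_of_real [:1, - 2 * cos t, 1:]"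
proof -
  have e1: "exp (\<i> * complex_of_real t) = cis t" by (simp add: cis_conv_exp)
  have e2: "exp (- \<i> * complex_of_real t) = cis (- t)" by (simp add: cis_conv_exp)
  have "cis t * cis (- t) = 1" by (simp add: cis_mult)
  moreover have "cis t + cis (- t) = complex_of_real (2 * cos t)" by (simp add: complex_eq_iff)
  ultimately show ?thesis unfolding e1 e2 lin_pair by (simp add: map_poly_pCons)
qed

definition PR :: "nat \<Rightarrow> (nat \<Rightarrow> real) \<Rightarrow> real poly" where
  "PR m x = [:x 0 * (1 / x 0), - (x 0 + 1 / x 0), 1:] * (\<Prod>k\<in>{1..m}. [:1, - 2 * cos (x k), 1:])"

lemma coef_fun_PR: "coef_fun m j x = coeff (PR m x) (2 * m + 2 - j)"
proof -
  have e: "(\<Prod>k\<in>{1..m}. [:- exp (\<i> * complex_of_real (x k)), 1:] * [:- exp (- \<i> * complex_of_real (x k)), 1:])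
     = (\<Prod>k\<in>{1..m}. map_poly complex_of_real [:1, - 2 * cos (x k), 1:])"
    by (rule prod.cong[OF refl]) (rule pair_exp)
  have "recip_poly m x = map_poly complex_of_real (PR m x)"
    unfolding recip_poly_def PR_def map_of_real_mult map_of_real_prod[OF finite_atLeastAtMost] pair_real e ..
  then show ?thesis by (simp add: coef_fun_def coeff_map_poly)
qed

lemma coeff3: fixes a b :: real shows "coeff ([:a, b, 1:] * R) n = a * coeff R n + b * coeff (pCons 0 R) n + coeff (pCons 0 (pCons 0 R)) n"
  by (simp add: mult_pCons_left coeff_pCons algebra_simps split: nat.split)

lemma partial_atI:
  assumes "((\<lambda>t. F (x(c := t))) has_real_derivative D) (at (x c))"
  shows "partial_at F x c = D"
  unfolding partial_at_def
proof (rule the_equality)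
  fix D' assume "((\<lambda>t. F (x(c := t))) has_real_derivative D') (at (x c))"
  then show "D' = D" using assms DERIV_unique by blast
qed (rule assms)

lemma deriv3:
  assumes "(\<alpha> has_real_derivative a') (at p)" "(\<beta> has_real_derivative b') (at p)"
  shows "((\<lambda>t. coeff ([:\<alpha> t, \<beta> t, 1:] * R) n) has_real_derivative (a' * coeff R n + b' * coeff (pCons 0 R) n)) (at p)"
  unfolding coeff3 using assms by (auto intro!: derivative_eq_intros)

lemma deriv_inv_prod: assumes "y \<noteq> 0" shows "((\<lambda>t::real. t * (1 / t)) has_real_derivative 0) (at y)"
proof (rule has_field_derivative_transform_within_open)
  show "((\<lambda>t::real. 1) has_real_derivative 0) (at y)" by simp
  show "open (- {0::real})" by auto
  show "y \<in> - {0}" using assms by auto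
  show "\<And>t::real. t \<in> - {0} \<Longrightarrow> 1 = t * (1 / t)" by auto
qed

lemma deriv_y: "y \<noteq> 0 \<Longrightarrow> ((\<lambda>t::real. - (t + 1 / t)) has_real_derivative - (1 - 1 / y^2)) (at y)"
  by (auto intro!: derivative_eq_intros simp: field_simps power2_eq_square)

lemma deriv_cos: "((\<lambda>t::real. - 2 * cos t) has_real_derivative 2 * sin s) (at s)"
  by (auto intro!: derivative_eq_intros)



lemma col0:
  fixes y :: real and \<theta> :: "nat \<Rightarrow> real"
  assumes y: "y \<noteq> 0" and i: "i \<le> m"
  shows "partial_at (coef_fun m (i+1)) (\<theta>(0 := y)) 0
       = - (1 - 1 / y^2) * coeff (\<Prod>k\<in>{1..m}. [:1, - 2 * cos (\<theta> k), 1:]) (2 * m - i)"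
proof (rule partial_atI)
  let ?R = "\<Prod>k\<in>{1..m}. [:1, - 2 * cos (\<theta> k), 1:]"
  have e: "coef_fun m (i+1) ((\<theta>(0 := y))(0 := t)) = coeff ([:t * (1 / t), - (t + 1 / t), 1:] * ?R) (Suc (2 * m - i))" for t
  proof -
    have "(\<Prod>k\<in>{1..m}. [:1, - 2 * cos (((\<theta>(0 := y))(0 := t)) k), 1:]) = ?R"
      by (rule prod.cong) auto
    moreover have "2 * m + 2 - (i + 1) = Suc (2 * m - i)" using i by simp
    ultimately show ?thesis by (simp add: coef_fun_PR PR_def)
  qed
  have "((\<lambda>t. coeff ([:t * (1 / t), - (t + 1 / t), 1:] * ?R) (Suc (2 * m - i))) has_real_derivative
      (0 * coeff ?R (Suc (2 * m - i)) + (- (1 - 1 / y^2)) * coeff (pCons 0 ?R) (Suc (2 * m - i)))) (at y)"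
    by (rule deriv3[OF deriv_inv_prod[OF y] deriv_y[OF y]])
  then show "((\<lambda>t. coef_fun m (i+1) ((\<theta>(0 := y))(0 := t))) has_real_derivative
      - (1 - 1 / y^2) * coeff ?R (2 * m - i)) (at ((\<theta>(0 := y)) 0))"
    unfolding e by simp
qed

lemma colc:
  fixes y :: real and \<theta> :: "nat \<Rightarrow> real"
  assumes y: "y \<noteq> 0" and i: "i \<le> m" and c: "1 \<le> c" "c \<le> m"
  shows "partial_at (coef_fun m (i+1)) (\<theta>(0 := y)) c
       = 2 * sin (\<theta> c) * coeff ([:1, - (y + 1 / y), 1:] * (\<Prod>k\<in>{1..m}-{c}. [:1, - 2 * cos (\<theta> k), 1:])) (2 * m - i)"
proof (rule partial_atI)
  let ?R = "[:1, - (y + 1 / y), 1:] * (\<Prod>k\<in>{1..m}-{c}. [:1, - 2 * cos (\<theta> k), 1:])"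
  have e: "coef_fun m (i+1) ((\<theta>(0 := y))(c := t)) = coeff ([:1, - 2 * cos t, 1:] * ?R) (Suc (2 * m - i))" for t
  proof -
    have "(\<Prod>k\<in>{1..m}. [:1, - 2 * cos (((\<theta>(0 := y))(c := t)) k), 1:])
        = [:1, - 2 * cos (((\<theta>(0 := y))(c := t)) c), 1:] * (\<Prod>k\<in>{1..m}-{c}. [:1, - 2 * cos (((\<theta>(0 := y))(c := t)) k), 1:])"
      by (rule prod.remove) (use c in auto)
    also have "(\<Prod>k\<in>{1..m}-{c}. [:1, - 2 * cos (((\<theta>(0 := y))(c := t)) k), 1:]) = (\<Prod>k\<in>{1..m}-{c}. [:1, - 2 * cos (\<theta> k), 1:])"
      by (rule prod.cong) auto
    finally have p: "(\<Prod>k\<in>{1..m}. [:1, - 2 * cos (((\<theta>(0 := y))(c := t)) k), 1:])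
        = [:1, - 2 * cos t, 1:] * (\<Prod>k\<in>{1..m}-{c}. [:1, - 2 * cos (\<theta> k), 1:])" by (simp only: fun_upd_same)
    have x0: "((\<theta>(0 := y))(c := t)) 0 = y" using c by simp
    have "PR m ((\<theta>(0 := y))(c := t)) = [:1, - 2 * cos t, 1:] * ?R"
    proof -
      have yy: "y * (1 / y) = 1" using y by simp
      show ?thesis unfolding PR_def x0 p yy by (rule mult.left_commute)
    qed
    moreover have "2 * m + 2 - (i + 1) = Suc (2 * m - i)" using i by simp
    ultimately show ?thesis by (simp add: coef_fun_PR)
  qed
  have "((\<lambda>t. coeff ([:(\<lambda>_. 1) t, - 2 * cos t, 1:] * ?R) (Suc (2 * m - i))) has_real_derivative
      (0 * coeff ?R (Suc (2 * m - i)) + 2 * sin (\<theta> c) * coeff (pCons 0 ?R) (Suc (2 * m - i)))) (at (\<theta> c))"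
    by (rule deriv3[OF DERIV_const deriv_cos])
  then show "((\<lambda>t. coef_fun m (i+1) ((\<theta>(0 := y))(c := t))) has_real_derivative
      2 * sin (\<theta> c) * coeff ?R (2 * m - i)) (at ((\<theta>(0 := y)) c))"
    unfolding e using c by simp
qed



definition rr :: "real \<Rightarrow> (nat \<Rightarrow> real) \<Rightarrow> nat \<Rightarrow> real" where
  "rr y \<theta> l = (if l = 0 then y + 1 / y else 2 * cos (\<theta> l))"

definition ww :: "real \<Rightarrow> (nat \<Rightarrow> real) \<Rightarrow> nat \<Rightarrow> real" where
  "ww y \<theta> c = (if c = 0 then - (1 - 1 / y^2) else 2 * sin (\<theta> c))"

lemma partial_eq:
  assumes y: "y \<noteq> 0" and i: "i \<le> m" and c: "c \<le> m"
  shows "partial_at (coef_fun m (i+1)) (\<theta>(0 := y)) c = ww y \<theta> c * coeff (Rc m (rr y \<theta>) c) (2 * m - i)"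
proof (cases "c = 0")
  case True
  have "Rc m (rr y \<theta>) 0 = (\<Prod>k\<in>{1..m}. [:1, - 2 * cos (\<theta> k), 1:])"
  proof -
    have "{0..m} - {0} = {1..m}" by auto
    then show ?thesis unfolding Rc_def by (auto intro!: prod.cong simp: rr_def)
  qed
  then show ?thesis using col0[OF y i, of \<theta>] True by (simp add: ww_def)
next
  case False
  then have c1: "1 \<le> c" by simp
  have "Rc m (rr y \<theta>) c = [:1, - (y + 1 / y), 1:] * (\<Prod>k\<in>{1..m}-{c}. [:1, - 2 * cos (\<theta> k), 1:])"
  proof -
    have e: "{0..m} - {c} = insert 0 ({1..m} - {c})" using False by auto
    have "Rc m (rr y \<theta>) c = [:1, - rr y \<theta> 0, 1:] * (\<Prod>l\<in>{1..m} - {c}. [:1, - rr y \<theta> l, 1:])"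
      unfolding Rc_def e by (subst prod.insert) auto
    also have "(\<Prod>l\<in>{1..m} - {c}. [:1, - rr y \<theta> l, 1:]) = (\<Prod>k\<in>{1..m}-{c}. [:1, - 2 * cos (\<theta> k), 1:])"
      by (rule prod.cong) (auto simp: rr_def)
    also have "rr y \<theta> 0 = y + 1 / y" by (simp add: rr_def)
    finally show ?thesis .
  qed
  then show ?thesis using colc[OF y i c1 c, of \<theta>] False by (simp add: ww_def)
qed

lemma jac_formula:
  assumes y: "y \<noteq> 0"
  shows "jacobian_f m (\<theta>(0 := y)) = VP m (rr y \<theta>) * (\<Prod>c<Suc m. \<bar>ww y \<theta> c\<bar>)"
proof -
  let ?J = "mat (m + 1) (m + 1) (\<lambda>(i, c). partial_at (coef_fun m (i + 1)) (\<theta>(0 := y)) c)"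
  let ?C = "Cm m (rr y \<theta>)"
  define Dg where "Dg = mat (Suc m) (Suc m) (\<lambda>(i,j). if i = j then ww y \<theta> i else (0::real))"
  have Cc: "?C \<in> carrier_mat (Suc m) (Suc m)" by (simp add: Cm_def)
  have Dc: "Dg \<in> carrier_mat (Suc m) (Suc m)" by (simp add: Dg_def)
  have JCD: "?J = ?C * Dg"
  proof (rule eq_matI)
    fix i c assume "i < dim_row (?C * Dg)" "c < dim_col (?C * Dg)"
    then have i: "i < Suc m" and c: "c < Suc m" using Cc Dc by auto
    have "(?C * Dg) $$ (i, c) = (\<Sum>k\<in>{0..<Suc m}. ?C $$ (i,k) * Dg $$ (k,c))"
      using i c Cc Dc by (simp add: scalar_prod_def)
    also have "\<dots> = (\<Sum>k\<in>{0..<Suc m}. if k = c then ?C $$ (i,c) * ww y \<theta> c else 0)"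
      by (rule sum.cong) (use c in \<open>auto simp: Dg_def\<close>)
    also have "\<dots> = ?C $$ (i,c) * ww y \<theta> c" using c by simp
    also have "\<dots> = ww y \<theta> c * coeff (Rc m (rr y \<theta>) c) (2 * m - i)"
      using i c by (simp add: Cm_def)
    also have "\<dots> = ?J $$ (i, c)"
      using i c partial_eq[OF y, of i m c \<theta>] by simp
    finally show "?J $$ (i, c) = (?C * Dg) $$ (i, c)" by simp
  qed (use Cc Dc in auto)
  have detD: "det Dg = (\<Prod>c<Suc m. ww y \<theta> c)"
  proof -
    have "det Dg = prod_list (diag_mat Dg)"
      by (rule det_upper_triangular[OF _ Dc]) (auto simp: Dg_def)
    also have "\<dots> = (\<Prod>c<Suc m. ww y \<theta> c)"
      unfolding diag_mat_def Dg_def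
      by (simp add: prod.distinct_set_conv_list[symmetric] atLeast0LessThan del: upt_Suc)
    finally show ?thesis .
  qed
  have "jacobian_f m (\<theta>(0 := y)) = \<bar>det (?C * Dg)\<bar>"
    unfolding jacobian_f_def JCD ..
  also have "\<dots> = \<bar>det ?C\<bar> * \<bar>det Dg\<bar>" by (simp add: det_mult[OF Cc Dc] abs_mult)
  also have "\<dots> = VP m (rr y \<theta>) * (\<Prod>c<Suc m. \<bar>ww y \<theta> c\<bar>)"
    by (simp only: abs_det_Cm detD abs_prod)
  finally show ?thesis .
qed



lemma abs2: fixes a b :: real shows "\<bar>2 * a - 2 * b\<bar> = 2 * \<bar>a - b\<bar>" by (cases "a \<le> b") auto

lemma regroup:
  fixes a p s :: "nat \<Rightarrow> real"
  shows "(\<Prod>j<m. a j * (2^j * p j)) * (\<Prod>j<m. 2 * s j) = (\<Prod>j<m. 2 * 2^j :: real) * (\<Prod>j<m. a j) * (\<Prod>j<m. s j) * (\<Prod>j<m. p j)"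
  by (simp add: prod.distrib mult_ac)

lemma pow2_tri: "(\<Prod>j<m. 2 * 2^j :: real) = 2 ^ (m * (m + 1) div 2)"
proof (induction m)
  case 0 then show ?case by simp
next
  case (Suc m)
  have e: "Suc m * (Suc m + 1) div 2 = m * (m + 1) div 2 + Suc m"
  proof -
    have "Suc m * (Suc m + 1) = m * (m + 1) + 2 * Suc m" by (simp add: algebra_simps)
    then show ?thesis by simp
  qed
  have "(\<Prod>j<Suc m. 2 * 2^j :: real) = 2 ^ (m * (m + 1) div 2) * 2 ^ (Suc m)"
    using Suc by simp
  also have "\<dots> = 2 ^ (m * (m + 1) div 2 + Suc m)" by (simp only: power_add)
  finally show ?case by (simp only: e)
qed

lemma pairs_reindex:
  fixes f :: "nat \<Rightarrow> nat \<Rightarrow> real"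
  shows "(\<Prod>(i, j)\<in>{(i, j). 1 \<le> i \<and> i < j \<and> j \<le> m}. f i j) = (\<Prod>j<m. \<Prod>i<j. f (Suc i) (Suc j))"
proof -
  have "(\<Prod>j<m. \<Prod>i<j. f (Suc i) (Suc j)) = (\<Prod>(j, i)\<in>Sigma {..<m} (\<lambda>j. {..<j}). f (Suc i) (Suc j))"
    by (rule prod.Sigma) auto
  also have "\<dots> = (\<Prod>(i, j)\<in>{(i, j). 1 \<le> i \<and> i < j \<and> j \<le> m}. f i j)"
    by (rule prod.reindex_bij_witness[where i = "\<lambda>(i, j). (j - 1, i - 1)" and j = "\<lambda>(j, i). (Suc i, Suc j)"]) auto
  finally show ?thesis by simp
qed

lemma theta_range:
  fixes \<theta> :: "nat \<Rightarrow> real"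
  assumes "0 \<le> \<theta> 1" and mono: "\<And>k. 1 \<le> k \<Longrightarrow> k < m \<Longrightarrow> \<theta> k \<le> \<theta> (k + 1)" and "\<theta> m \<le> pi"
    and k: "1 \<le> k" "k \<le> m"
  shows "0 \<le> \<theta> k" "\<theta> k \<le> pi"
proof -
  have lo: "\<theta> 1 \<le> \<theta> k" if "1 \<le> k" "k \<le> m" for k
    using that
  proof (induction k)
    case 0 then show ?case by simp
  next
    case (Suc k)
    show ?case
    proof (cases "k = 0")
      case True then show ?thesis by simp
    next
      case False
      then have "\<theta> 1 \<le> \<theta> k" using Suc by simp
      also have "\<theta> k \<le> \<theta> (Suc k)" using mono[of k] Suc False by simp
      finally show ?thesis .
    qed
  qed
  have hi: "\<theta> k \<le> \<theta> m" if "1 \<le> k" "k + d = m" for k d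
    using that
  proof (induction d arbitrary: k)
    case 0 then show ?case by simp
  next
    case (Suc d)
    have "\<theta> k \<le> \<theta> (k + 1)" using mono[of k] Suc.prems by simp
    also have "\<theta> (k + 1) \<le> \<theta> m" using Suc.IH[of "k+1"] Suc.prems by simp
    finally show ?case .
  qed
  show "0 \<le> \<theta> k" using lo[OF k] assms(1) by simp
  show "\<theta> k \<le> pi" using hi[of k "m - k"] k assms(3) by simp
qed

theorem lemma2:
  fixes m :: nat and H y :: real and \<theta> :: "nat \<Rightarrow> real"
  assumes "m \<ge> 1" and "H > 1" and "1 < y" and "y \<le> H"
    and "0 \<le> \<theta> 1" and "\<And>k. 1 \<le> k \<Longrightarrow> k < m \<Longrightarrow> \<theta> k \<le> \<theta> (k + 1)" and "\<theta> m \<le> pi"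
  shows "jacobian_f m (\<theta>(0 := y)) =
    2 ^ (m * (m + 1) div 2) * (1 - 1 / y\<^sup>2)
    * (\<Prod>l\<in>{1..m}. y + 1 / y - 2 * cos (\<theta> l))
    * (\<Prod>l\<in>{1..m}. sin (\<theta> l))
    * (\<Prod>(i, j)\<in>{(i, j). 1 \<le> i \<and> i < j \<and> j \<le> m}. \<bar>cos (\<theta> i) - cos (\<theta> j)\<bar>)"
proof -
  have y0: "y \<noteq> 0" using assms(3) by simp
  have ypos: "y > 0" using assms(3) by simp
  have y2: "y + 1 / y > 2"
  proof -
    have "(y - 1)^2 > 0" using assms(3) by simp
    then have "y * y + 1 > 2 * y" by (simp add: power2_eq_square algebra_simps)
    then show ?thesis using ypos by (simp add: field_simps)
  qed
  have w0: "1 - 1 / y^2 > 0"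
  proof -
    have "y^2 > 1" using assms(3) by (simp add: one_less_power)
    then have "1 / y^2 < 1" by (simp add: divide_less_eq_1)
    then show ?thesis by simp
  qed
  define r where "r = rr y \<theta>"
  define a where "a = (\<lambda>j. y + 1 / y - 2 * cos (\<theta> (Suc j)))"
  define p where "p = (\<lambda>j. \<Prod>i<j. \<bar>cos (\<theta> (Suc i)) - cos (\<theta> (Suc j))\<bar>)"
  define s where "s = (\<lambda>j. sin (\<theta> (Suc j)))"
  have VPe: "VP m r = (\<Prod>j<m. a j * (2^j * p j))"
  proof -
    have "VP m r = (\<Prod>j<m. \<Prod>i<Suc j. \<bar>r i - r (Suc j)\<bar>)"
      unfolding VP_def by (subst prod.atMost_shift) simp
    also have "\<dots> = (\<Prod>j<m. a j * (2^j * p j))"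
    proof (rule prod.cong[OF refl])
      fix j assume "j \<in> {..<m}"
      have "(\<Prod>i<Suc j. \<bar>r i - r (Suc j)\<bar>) = \<bar>r 0 - r (Suc j)\<bar> * (\<Prod>i<j. \<bar>r (Suc i) - r (Suc j)\<bar>)"
        by (rule prod.lessThan_Suc_shift)
      also have "\<bar>r 0 - r (Suc j)\<bar> = a j"
      proof -
        have "cos (\<theta> (Suc j)) \<le> 1" by simp
        then have "y + 1 / y - 2 * cos (\<theta> (Suc j)) \<ge> 0" using y2 by linarith
        then show ?thesis by (simp add: r_def rr_def a_def)
      qed
      also have "(\<Prod>i<j. \<bar>r (Suc i) - r (Suc j)\<bar>) = (\<Prod>i<j. 2 * \<bar>cos (\<theta> (Suc i)) - cos (\<theta> (Suc j))\<bar>)"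
        by (rule prod.cong[OF refl]) (simp add: r_def rr_def abs2)
      also have "\<dots> = 2^j * p j" by (simp add: prod.distrib p_def)
      finally show "(\<Prod>i<Suc j. \<bar>r i - r (Suc j)\<bar>) = a j * (2^j * p j)" .
    qed
    finally show ?thesis .
  qed
  have We: "(\<Prod>c<Suc m. \<bar>ww y \<theta> c\<bar>) = (1 - 1 / y^2) * (\<Prod>j<m. 2 * s j)"
  proof -
    have "(\<Prod>c<Suc m. \<bar>ww y \<theta> c\<bar>) = \<bar>ww y \<theta> 0\<bar> * (\<Prod>j<m. \<bar>ww y \<theta> (Suc j)\<bar>)"
      by (rule prod.lessThan_Suc_shift)
    also have "\<bar>ww y \<theta> 0\<bar> = 1 - 1 / y^2" using w0 by (simp add: ww_def)
    also have "(\<Prod>j<m. \<bar>ww y \<theta> (Suc j)\<bar>) = (\<Prod>j<m. 2 * s j)"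
    proof (rule prod.cong[OF refl])
      fix j assume "j \<in> {..<m}"
      then have "0 \<le> \<theta> (Suc j)" "\<theta> (Suc j) \<le> pi"
        using theta_range[OF assms(5) assms(6) assms(7), of "Suc j"] by auto
      then have "sin (\<theta> (Suc j)) \<ge> 0" by (rule sin_ge_zero)
      then show "\<bar>ww y \<theta> (Suc j)\<bar> = 2 * s j" by (simp add: ww_def s_def)
    qed
    finally show ?thesis .
  qed
  have "jacobian_f m (\<theta>(0 := y)) = VP m r * (\<Prod>c<Suc m. \<bar>ww y \<theta> c\<bar>)"
    unfolding r_def by (rule jac_formula[OF y0])
  also have "\<dots> = (1 - 1 / y^2) * ((\<Prod>j<m. a j * (2^j * p j)) * (\<Prod>j<m. 2 * s j))"
    unfolding VPe We by (simp add: mult_ac)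
  also have "\<dots> = (1 - 1 / y^2) * ((\<Prod>j<m. 2 * 2^j :: real) * (\<Prod>j<m. a j) * (\<Prod>j<m. s j) * (\<Prod>j<m. p j))"
    by (simp only: regroup)
  also have "\<dots> = 2 ^ (m * (m + 1) div 2) * (1 - 1 / y\<^sup>2)
    * (\<Prod>l\<in>{1..m}. y + 1 / y - 2 * cos (\<theta> l))
    * (\<Prod>l\<in>{1..m}. sin (\<theta> l))
    * (\<Prod>(i, j)\<in>{(i, j). 1 \<le> i \<and> i < j \<and> j \<le> m}. \<bar>cos (\<theta> i) - cos (\<theta> j)\<bar>)"
    unfolding pow2_tri pairs_reindex
    by (simp add: prod.atLeast1_atMost_eq a_def s_def p_def mult_ac)
  finally show ?thesis .
qed

end
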